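(* Let $2<\alpha<3$, $0<\varepsilon\le\frac12$, and let $\gamma\in C^\infty(\mathbb R/\mathbb Z,\mathbb R^n)$ be a simple closed curve parametrized by arc length. There is an analytic function $G_2^\alpha:(\mathbb R^n\setminus\{0,1\})\times\mathbb R^{4n}\to\mathbb R^n$ (independent of $\gamma$ and $\varepsilon$), such that for all $x\in\mathbb R/\mathbb Z$, $$(P^\perp_{\dot\gamma}R_2^{\alpha,\varepsilon}\gamma)(x)=\int_{|w|\in[\varepsilon,\frac12]}\iiiint_{[0,1]^4}(s_1-s_2)^2\,G_2^\alpha\Big(\int_0^1\dot\gamma(x+tw)\,\mathrm dt,\ \dot\gamma(x),\ \ddot\gamma(x+s_2w+(s_1-s_2)\phi_1w),\ \ddot\gamma(x+s_2w+(s_1-s_2)\phi_2w),\ \ddot\gamma(x)\Big)\,\mathrm d\phi_1\,\mathrm d\phi_2\,\mathrm ds_1\,\mathrm ds_2\,\frac{\mathrm dw}{|w|^{\alpha-2}}.$$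
   Context: $(R_2^{\alpha,\varepsilon}\gamma)(x)=\int_{|w|\in[\varepsilon,\frac12]}\ddot\gamma(x)\Big(\frac{1}{|\gamma(x+w)-\gamma(x)|^\alpha}-\frac{1}{|w|^\alpha}\Big)\mathrm dw$. For $v\in\mathbb R^n$, $P^\perp_{\dot\gamma(x)}v=v-\langle v,\dot\gamma(x)\rangle\dot\gamma(x)$ and $(P^\perp_{\dot\gamma}u)(x)=P^\perp_{\dot\gamma(x)}u(x)$. Here "$\mathbb R^n\setminus\{0,1\}$" means the first argument $a$ avoids $|a|\in\{0,1\}$ (the function involves $g(a)=\frac{1}{2|a|^\alpha}\frac{1-|a|^\alpha}{1-|a|^2}$). *)

theory Defs
  imports "HOL-Analysis.Analysis"
begin

definition smooth_fun :: "(real \<Rightarrow> 'a::real_normed_vector) \<Rightarrow> bool" where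
  "smooth_fun g \<longleftrightarrow> (\<exists>D :: nat \<Rightarrow> real \<Rightarrow> 'a. D 0 = g \<and>
      (\<forall>k t. (D k has_vector_derivative D (Suc k) t) (at t)))"

definition dot :: "(real \<Rightarrow> 'a::real_normed_vector) \<Rightarrow> real \<Rightarrow> 'a" where
  "dot g x = vector_derivative g (at x)"

definition ddot :: "(real \<Rightarrow> 'a::real_normed_vector) \<Rightarrow> real \<Rightarrow> 'a" where
  "ddot g x = vector_derivative (dot g) (at x)"

text \<open>A smooth simple closed curve \<gamma> : R/Z \<rightarrow> R^n parametrized by arc length,
  represented as a 1-periodic map on R, injective on [0,1).\<close>
definition arclength_simple_closed_curve :: "(real \<Rightarrow> real^'n) \<Rightarrow> bool" where
  "arclength_simple_closed_curve g \<longleftrightarrow>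
     smooth_fun g \<and> (\<forall>x. g (x + 1) = g x) \<and> inj_on g {0..<1} \<and>
     (\<forall>x. norm (dot g x) = 1)"

definition R2 :: "real \<Rightarrow> real \<Rightarrow> (real \<Rightarrow> real^'n) \<Rightarrow> real \<Rightarrow> real^'n" where
  "R2 \<alpha> \<epsilon> g x = integral {w. \<epsilon> \<le> \<bar>w\<bar> \<and> \<bar>w\<bar> \<le> 1/2}
     (\<lambda>w. (1 / norm (g (x + w) - g x) powr \<alpha> - 1 / \<bar>w\<bar> powr \<alpha>) *\<^sub>R ddot g x)"

definition Pperp :: "'a::real_inner \<Rightarrow> 'a \<Rightarrow> 'a" where
  "Pperp v u = u - (inner u v) *\<^sub>R v"

text \<open>Real analyticity of a real-valued function on a Euclidean space: locally the sum of an
  (absolutely) convergent power series in the coordinates w.r.t. the standard basis.\<close>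
definition real_analytic_on_real :: "('a::euclidean_space \<Rightarrow> real) \<Rightarrow> 'a set \<Rightarrow> bool" where
  "real_analytic_on_real f S \<longleftrightarrow>
     (\<forall>a\<in>S. \<exists>r>0. \<exists>c :: ('a \<Rightarrow> nat) \<Rightarrow> real. \<forall>y\<in>ball a r.
        ((\<lambda>k. c k * (\<Prod>b\<in>Basis. ((y - a) \<bullet> b) ^ k b)) has_sum f y)
          {k. \<forall>b. b \<notin> Basis \<longrightarrow> k b = 0})"

definition real_analytic_on :: "('a::euclidean_space \<Rightarrow> 'b::euclidean_space) \<Rightarrow> 'a set \<Rightarrow> bool" where
  "real_analytic_on f S \<longleftrightarrow> open S \<and> (\<forall>b\<in>Basis. real_analytic_on_real (\<lambda>z. f z \<bullet> b) S)"

end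

theory Submission
  imports Defs "HOL-Complex_Analysis.Complex_Analysis"
begin


definition hfun :: "real \<Rightarrow> real \<Rightarrow> real" where
  "hfun \<beta> t = (1 - t powr \<beta>) / (2 * t powr \<beta> * (1 - t))"

lemma hfun_series:
  fixes \<beta> s0 :: real
  assumes s0: "s0 > 0" "s0 \<noteq> 1"
  shows "\<exists>\<rho>>0. \<exists>hc::nat\<Rightarrow>real. \<forall>t. \<bar>t - s0\<bar> < \<rho> \<longrightarrow>
     summable (\<lambda>m. \<bar>hc m\<bar> * \<bar>t - s0\<bar>^m) \<and> (\<lambda>m. hc m * (t - s0)^m) sums hfun \<beta> t"
proof -
  define R where "R = min s0 \<bar>1 - s0\<bar>"
  have R: "R > 0" using s0 by (auto simp: R_def)
  define H where "H = (\<lambda>z::complex. (1 - z powr of_real \<beta>) / (2 * z powr of_real \<beta> * (1 - z)))"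
  have inb: "Re z > 0 \<and> z \<noteq> 1" if "z \<in> ball (of_real s0) R" for z
  proof -
    have d: "cmod (z - of_real s0) < R" using that by (simp add: dist_norm norm_minus_commute)
    have "\<bar>Re z - s0\<bar> \<le> cmod (z - of_real s0)" using abs_Re_le_cmod[of "z - of_real s0"] by simp
    hence "Re z > 0" using d by (auto simp: R_def)
    moreover have "z \<noteq> 1"
    proof
      assume "z = 1" then have "cmod (1 - of_real s0) < R" using d by simp
      then have "\<bar>1 - s0\<bar> < R" by (metis norm_of_real of_real_1 of_real_diff)
      thus False by (simp add: R_def)
    qed
    ultimately show ?thesis by simp
  qed
  have hol: "H holomorphic_on ball (of_real s0) R"
    unfolding H_def
    apply (intro holomorphic_intros)
    subgoal for z using inb[of z] by (auto simp: complex_nonpos_Reals_iff powr_def)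
    subgoal for z using inb[of z] by (auto simp: complex_nonpos_Reals_iff powr_def)
    subgoal for z using inb[of z] by (auto simp: complex_nonpos_Reals_iff powr_def)
    done
  define ck where "ck n = (deriv ^^ n) H (of_real s0) / fact n" for n
  have ser: "(\<lambda>n. ck n * (w - of_real s0)^n) sums H w" if "w \<in> ball (of_real s0) R" for w
    using holomorphic_power_series[OF hol that] by (simp add: ck_def)
  have Hre: "H (of_real t) = of_real (hfun \<beta> t)" if "t > 0" for t
    using that by (simp add: H_def hfun_def powr_of_real)
  show ?thesis
  proof (intro exI[of _ "R/2"] conjI exI[of _ "\<lambda>n. Re (ck n)"] allI impI)
    show "R/2 > 0" using R by simp
    fix t assume t: "\<bar>t - s0\<bar> < R/2"
    have w1: "of_real (s0 + 3*R/4) \<in> ball (complex_of_real s0) R"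
      using R by (simp add: dist_norm)
    have sm: "summable (\<lambda>n. ck n * (complex_of_real (3*R/4))^n)"
      using sums_summable[OF ser[OF w1]] by simp
    have lt: "norm (complex_of_real (t - s0)) < norm (complex_of_real (3*R/4))"
      unfolding norm_of_real using t R by simp
    have "summable (\<lambda>n. norm (ck n * (complex_of_real (t - s0))^n))"
      by (rule powser_insidea[OF sm lt])
    then show "summable (\<lambda>m. \<bar>Re (ck m)\<bar> * \<bar>t - s0\<bar>^m)"
    proof (rule summable_comparison_test')
      fix n
      have "\<bar>Re (ck n)\<bar> * \<bar>t - s0\<bar>^n \<le> cmod (ck n) * \<bar>t - s0\<bar>^n"
        by (rule mult_right_mono[OF abs_Re_le_cmod]) simp
      also have "\<dots> = norm (ck n * (complex_of_real (t - s0))^n)"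
        by (simp only: norm_mult norm_power norm_of_real)
      finally show "norm (\<bar>Re (ck n)\<bar> * \<bar>t - s0\<bar>^n) \<le> norm (ck n * (complex_of_real (t - s0))^n)"
        by simp
    qed
    have "cmod (of_real s0 - of_real t) = \<bar>s0 - t\<bar>" by (metis norm_of_real of_real_diff)
    hence wt: "of_real t \<in> ball (complex_of_real s0) R"
      using t R by (simp add: dist_norm abs_minus_commute)
    have tpos: "t > 0" using t R by (auto simp: R_def abs_if split: if_splits)
    have "(\<lambda>n. Re (ck n * (of_real t - of_real s0)^n)) sums Re (H (of_real t))"
      using sums_Re[OF ser[OF wt]] .
    then show "(\<lambda>m. Re (ck m) * (t - s0)^m) sums hfun \<beta> t"
    proof -
      have e: "Re (ck n * (of_real t - of_real s0)^n) = Re (ck n) * (t - s0)^n" for n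
        proof -
          have "Re (ck n * complex_of_real ((t - s0)^n)) = Re (ck n) * (t - s0)^n"
            by simp
          thus ?thesis by (simp only: of_real_diff[symmetric] of_real_power[symmetric])
        qed
      show ?thesis using \<open>(\<lambda>n. Re (ck n * (of_real t - of_real s0)^n)) sums Re (H (of_real t))\<close>
        unfolding e Hre[OF tpos] Re_complex_of_real .
    qed
  qed
qed


definition mon :: "'a::euclidean_space list \<Rightarrow> 'a \<Rightarrow> real" where
  "mon bs u = prod_list (map (\<lambda>b. u \<bullet> b) bs)"

definition fam :: "'i set \<Rightarrow> ('i \<Rightarrow> real) \<Rightarrow> ('i \<Rightarrow> 'a::euclidean_space list) \<Rightarrow> ('a \<Rightarrow> real) \<Rightarrow> 'a \<Rightarrow> real \<Rightarrow> bool" where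
  "fam I c v f z0 r \<longleftrightarrow> (\<forall>i\<in>I. set (v i) \<subseteq> Basis) \<and>
     (\<forall>u. norm u < r \<longrightarrow> (\<lambda>i. norm (c i * mon (v i) u)) summable_on I \<and>
        ((\<lambda>i. c i * mon (v i) u) has_sum f (z0 + u)) I)"

lemma mon_Nil[simp]: "mon [] u = 1" by (simp add: mon_def)
lemma mon_append[simp]: "mon (xs @ ys) u = mon xs u * mon ys u" by (simp add: mon_def)
lemma mon_Cons[simp]: "mon (x # ys) u = (u \<bullet> x) * mon ys u" by (simp add: mon_def)

lemma mon_prod:
  fixes bs :: "'a::euclidean_space list"
  shows "set bs \<subseteq> Basis \<Longrightarrow> mon bs u = (\<Prod>b\<in>Basis. (u \<bullet> b) ^ count (mset bs) b)"
proof (induction bs)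
  case Nil then show ?case by simp
next
  case (Cons x bs)
  have x: "x \<in> Basis" using Cons.prems by simp
  have "(\<Prod>b\<in>Basis. (u \<bullet> b) ^ count (mset (x # bs)) b)
      = (\<Prod>b\<in>Basis. (if b = x then u \<bullet> b else 1) * (u \<bullet> b) ^ count (mset bs) b)"
    by (intro prod.cong) auto
  also have "\<dots> = (\<Prod>b\<in>Basis. (if b = x then u \<bullet> b else 1)) * (\<Prod>b\<in>Basis. (u \<bullet> b) ^ count (mset bs) b)"
    by (rule prod.distrib)
  also have "(\<Prod>b\<in>Basis. (if b = x then u \<bullet> b else 1)) = u \<bullet> x"
    using x by (simp add: prod.delta)
  finally show ?case using Cons by simp
qed

lemma abs_summable_subset:
  fixes f :: "'i \<Rightarrow> real"
  assumes "(\<lambda>x. norm (f x)) summable_on A" "B \<subseteq> A" shows "(\<lambda>x. norm (f x)) summable_on B"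
  using assms summable_on_subset by blast

lemma regroup:
  fixes z0 :: "'a::euclidean_space"
  assumes F: "fam I c v f z0 r"
  shows "\<exists>c'. \<forall>y\<in>ball z0 r. ((\<lambda>k. c' k * (\<Prod>b\<in>Basis. ((y - z0) \<bullet> b) ^ k b)) has_sum f y)
            {k. \<forall>b. b \<notin> Basis \<longrightarrow> k b = 0}"
proof -
  define key where "key i = (\<lambda>b. count (mset (v i)) b)" for i
  define K where "K = {k::'a\<Rightarrow>nat. \<forall>b. b \<notin> Basis \<longrightarrow> k b = 0}"
  define Fb where "Fb k = {i\<in>I. key i = k}" for k
  define c' where "c' k = infsum c (Fb k)" for k
  have vB: "\<And>i. i \<in> I \<Longrightarrow> set (v i) \<subseteq> Basis" using F by (simp add: fam_def)
  show ?thesis unfolding K_def[symmetric]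
  proof (intro exI[of _ c'] ballI)
    fix y assume y: "y \<in> ball z0 r"
    define u where "u = y - z0"
    have nu: "norm u < r" using y by (simp add: u_def dist_norm norm_minus_commute)
    define M where "M k = (\<Prod>b\<in>Basis. (u \<bullet> b) ^ k b)" for k
    have T: "c i * mon (v i) u = c i * M (key i)" if "i \<in> I" for i
      using mon_prod[OF vB[OF that]] by (simp add: M_def key_def)
    have abs: "(\<lambda>i. norm (c i * mon (v i) u)) summable_on I"
      and hs: "((\<lambda>i. c i * mon (v i) u) has_sum f (z0 + u)) I"
      using F nu by (auto simp: fam_def)
    have keyK: "key i \<in> K" if "i \<in> I" for i
      using vB[OF that] by (auto simp: K_def key_def count_eq_zero_iff)
    have inj: "inj_on (\<lambda>i. (key i, i)) I" by (auto intro: inj_onI)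
    have img: "(\<lambda>i. (key i, i)) ` I = Sigma K Fb"
      using keyK by (auto simp: Fb_def)
    have hs2: "((\<lambda>(k,i). c i * M k) has_sum f y) (Sigma K Fb)"
    proof -
      have hs': "((\<lambda>i. c i * mon (v i) u) has_sum f y) I" using hs by (simp add: u_def)
      have "((\<lambda>i. c i * M (key i)) has_sum f y) I"
        using has_sum_cong[of I "\<lambda>i. c i * mon (v i) u" "\<lambda>i. c i * M (key i)"] hs' T by blast
      hence "(((\<lambda>(k,i). c i * M k) \<circ> (\<lambda>i. (key i, i))) has_sum f y) I"
        by (simp add: o_def)
      thus ?thesis using has_sum_reindex[OF inj] img by metis
    qed
    have fib: "((\<lambda>i. c i * M k) has_sum (c' k * M k)) (Fb k)" if "k \<in> K" for k
    proof (cases "M k = 0")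
      case True thus ?thesis by simp
    next
      case False
      have sub: "Fb k \<subseteq> I" by (auto simp: Fb_def)
      have "(\<lambda>i. c i * mon (v i) u) summable_on Fb k"
        using abs_summable_summable[OF abs_summable_subset[OF abs sub]] .
      hence "(\<lambda>i. c i * M k) summable_on Fb k"
        by (rule summable_on_cong[THEN iffD1, rotated]) (use T sub Fb_def in auto)
      hence "(\<lambda>i. (c i * M k) * (1 / M k)) summable_on Fb k"
        by (rule summable_on_cmult_left)
      hence "c summable_on Fb k" using False by simp
      hence "(c has_sum c' k) (Fb k)" by (simp add: c'_def)
      thus ?thesis by (rule has_sum_cmult_left)
    qed
    have "((\<lambda>k. c' k * M k) has_sum f y) K"
      by (rule has_sum_SigmaD[OF hs2]) (use fib in simp)
    thus "((\<lambda>k. c' k * (\<Prod>b\<in>Basis. ((y - z0) \<bullet> b) ^ k b)) has_sum f y) K"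
      by (simp add: M_def u_def)
  qed
qed


lemma sigma_helper:
  fixes f :: "'a \<times> 'b \<Rightarrow> real"
  assumes "(\<lambda>x. norm (f x)) summable_on Sigma A B"
    and "\<And>x. x \<in> A \<Longrightarrow> ((\<lambda>y. f (x, y)) has_sum b x) (B x)"
    and "(b has_sum s) A"
  shows "(f has_sum s) (Sigma A B)"
proof -
  have "f summable_on Sigma A B" using abs_summable_summable assms(1) by blast
  hence h: "(f has_sum infsum f (Sigma A B)) (Sigma A B)" by (rule has_sum_infsum)
  have "(b has_sum infsum f (Sigma A B)) A" by (rule has_sum_SigmaD[OF h assms(2)])
  hence "infsum f (Sigma A B) = s" using assms(3) has_sum_unique by blast
  thus ?thesis using h by simp
qed

lemma fam_lin:
  fixes q z0 :: "'a::euclidean_space"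
  shows "fam (insert None (Some ` Basis)) (\<lambda>i. case i of None \<Rightarrow> z0 \<bullet> q | Some b \<Rightarrow> q \<bullet> b)
           (\<lambda>i. case i of None \<Rightarrow> [] | Some b \<Rightarrow> [b]) (\<lambda>z. z \<bullet> q) z0 r"
  unfolding fam_def
proof (intro conjI allI impI ballI)
  fix i :: "'a option" assume "i \<in> insert None (Some ` Basis)"
  thus "set (case i of None \<Rightarrow> [] | Some b \<Rightarrow> [b]) \<subseteq> Basis" by auto
next
  fix u :: 'a
  let ?T = "\<lambda>i. (case i of None \<Rightarrow> z0 \<bullet> q | Some b \<Rightarrow> q \<bullet> b) * mon (case i of None \<Rightarrow> [] | Some b \<Rightarrow> [b]) u"
  show "(\<lambda>i. norm (?T i)) summable_on insert None (Some ` Basis)" by simp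
  have "sum ?T (insert None (Some ` Basis)) = z0 \<bullet> q + (\<Sum>b\<in>Basis. q \<bullet> b * (u \<bullet> b))"
    by (subst sum.insert) (auto simp: sum.reindex)
  also have "\<dots> = (z0 + u) \<bullet> q"
    by (simp add: inner_add_left euclidean_inner[of u q] mult.commute)
  finally show "(?T has_sum (z0 + u) \<bullet> q) (insert None (Some ` Basis))"
    by (intro has_sum_finiteI) auto
qed

lemma fam_sum:
  fixes z0 :: "'a::euclidean_space"
  assumes J: "finite J" and F: "\<And>j. j \<in> J \<Longrightarrow> fam (I j) (c j) (v j) (f j) z0 r"
  shows "fam (Sigma J I) (\<lambda>(j,i). c j i) (\<lambda>(j,i). v j i) (\<lambda>z. \<Sum>j\<in>J. f j z) z0 r"
  unfolding fam_def
proof (intro conjI allI impI ballI)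
  fix x assume "x \<in> Sigma J I"
  thus "set (case x of (j, i) \<Rightarrow> v j i) \<subseteq> Basis" using F by (auto simp: fam_def)
next
  fix u :: 'a assume u: "norm u < r"
  have abs: "(\<lambda>i. norm (c j i * mon (v j i) u)) summable_on I j"
    and hs: "((\<lambda>i. c j i * mon (v j i) u) has_sum f j (z0 + u)) (I j)" if "j \<in> J" for j
    using F[OF that] u by (auto simp: fam_def)
  show abs2: "(\<lambda>x. norm ((case x of (j, i) \<Rightarrow> c j i) * mon (case x of (j, i) \<Rightarrow> v j i) u)) summable_on Sigma J I"
  proof (rule Infinite_Sum.abs_summable_on_Sigma_iff[THEN iffD2], intro conjI ballI)
    fix j assume "j \<in> J"
    thus "(\<lambda>y. norm ((case (j, y) of (j, i) \<Rightarrow> c j i) * mon (case (j, y) of (j, i) \<Rightarrow> v j i) u)) summable_on I j"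
      using abs by simp
  next
    show "(\<lambda>x. norm (infsum (\<lambda>y. norm ((case (x, y) of (j, i) \<Rightarrow> c j i) * mon (case (x, y) of (j, i) \<Rightarrow> v j i) u)) (I x))) summable_on J"
      using J by simp
  qed
  show "((\<lambda>x. (case x of (j, i) \<Rightarrow> c j i) * mon (case x of (j, i) \<Rightarrow> v j i) u) has_sum (\<Sum>j\<in>J. f j (z0 + u))) (Sigma J I)"
    by (rule sigma_helper[OF abs2]) (use hs J in auto)
qed

lemma fam_mult:
  fixes z0 :: "'a::euclidean_space"
  assumes F1: "fam I1 c1 v1 f1 z0 r" and F2: "fam I2 c2 v2 f2 z0 r"
  shows "fam (I1 \<times> I2) (\<lambda>(i,j). c1 i * c2 j) (\<lambda>(i,j). v1 i @ v2 j) (\<lambda>z. f1 z * f2 z) z0 r"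
  unfolding fam_def
proof (intro conjI allI impI ballI)
  fix x assume "x \<in> I1 \<times> I2"
  thus "set (case x of (i, j) \<Rightarrow> v1 i @ v2 j) \<subseteq> Basis" using F1 F2 by (auto simp: fam_def)
next
  fix u :: 'a assume u: "norm u < r"
  define T1 where "T1 i = c1 i * mon (v1 i) u" for i
  define T2 where "T2 j = c2 j * mon (v2 j) u" for j
  have abs1: "(\<lambda>i. norm (T1 i)) summable_on I1" and hs1: "(T1 has_sum f1 (z0 + u)) I1"
    unfolding T1_def using F1 u by (auto simp: fam_def)
  have abs2: "(\<lambda>i. norm (T2 i)) summable_on I2" and hs2: "(T2 has_sum f2 (z0 + u)) I2"
    unfolding T2_def using F2 u by (auto simp: fam_def)
  have eq: "(case x of (i, j) \<Rightarrow> c1 i * c2 j) * mon (case x of (i, j) \<Rightarrow> v1 i @ v2 j) u = T1 (fst x) * T2 (snd x)" for x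
    by (cases x) (simp add: T1_def T2_def)
  define N2 where "N2 = infsum (\<lambda>j. norm (T2 j)) I2"
  have absP: "(\<lambda>x. norm (T1 (fst x) * T2 (snd x))) summable_on Sigma I1 (\<lambda>_. I2)"
  proof (rule Infinite_Sum.abs_summable_on_Sigma_iff[THEN iffD2], intro conjI ballI)
    fix i assume "i \<in> I1"
    show "(\<lambda>y. norm (T1 (fst (i, y)) * T2 (snd (i, y)))) summable_on I2"
      using summable_on_cmult_right[OF abs2, of "norm (T1 i)"] by (simp add: norm_mult abs_mult)
  next
    have e: "\<And>x. infsum (\<lambda>y. \<bar>T1 x\<bar> * \<bar>T2 y\<bar>) I2 = \<bar>T1 x\<bar> * N2"
      by (simp add: infsum_cmult_right' N2_def)
    have "N2 \<ge> 0" unfolding N2_def by (intro infsum_nonneg) auto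
    then show "(\<lambda>x. norm (infsum (\<lambda>y. norm (T1 (fst (x, y)) * T2 (snd (x, y)))) I2)) summable_on I1"
      using summable_on_cmult_left[OF abs1, of N2] by (simp add: abs_mult e)
  qed
  show "(\<lambda>x. norm ((case x of (i, j) \<Rightarrow> c1 i * c2 j) * mon (case x of (i, j) \<Rightarrow> v1 i @ v2 j) u)) summable_on I1 \<times> I2"
    using absP unfolding eq by simp
  have "((\<lambda>x. T1 (fst x) * T2 (snd x)) has_sum (f1 (z0 + u) * f2 (z0 + u))) (Sigma I1 (\<lambda>_. I2))"
  proof (rule sigma_helper[OF absP])
    fix i assume "i \<in> I1"
    show "((\<lambda>y. T1 (fst (i, y)) * T2 (snd (i, y))) has_sum T1 i * f2 (z0 + u)) I2"
      using has_sum_cmult_right[OF hs2] by simp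
  next
    show "((\<lambda>i. T1 i * f2 (z0 + u)) has_sum f1 (z0 + u) * f2 (z0 + u)) I1"
      by (rule has_sum_cmult_left[OF hs1])
  qed
  thus "((\<lambda>x. (case x of (i, j) \<Rightarrow> c1 i * c2 j) * mon (case x of (i, j) \<Rightarrow> v1 i @ v2 j) u) has_sum f1 (z0 + u) * f2 (z0 + u)) (I1 \<times> I2)"
    unfolding eq by simp
qed



lemma mon_concat: "mon (concat (map f [0..<m])) u = (\<Prod>k<m. mon (f k) u)"
  by (induction m) (auto simp: lessThan_Suc mult.commute)

lemma fam_comp:
  fixes z0 :: "'a::euclidean_space" and t0 :: real
  assumes I: "finite I"
  and F: "fam I c v (\<lambda>z. p z - t0) z0 r"
  and maj: "\<And>u. norm u < r \<Longrightarrow> (\<Sum>i\<in>I. \<bar>c i * mon (v i) u\<bar>) < \<rho>"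
  and H: "\<And>t. \<bar>t - t0\<bar> < \<rho> \<Longrightarrow> summable (\<lambda>m. \<bar>hc m\<bar> * \<bar>t - t0\<bar>^m) \<and> (\<lambda>m. hc m * (t - t0)^m) sums h t"
  shows "fam (Sigma UNIV (\<lambda>m. PiE {..<m} (\<lambda>_. I))) (\<lambda>(m,\<tau>). hc m * (\<Prod>k<m. c (\<tau> k)))
           (\<lambda>(m,\<tau>). concat (map (\<lambda>k. v (\<tau> k)) [0..<m])) (\<lambda>z. h (p z)) z0 r"
  unfolding fam_def
proof (intro conjI allI impI ballI)
  fix x :: "nat \<times> (nat \<Rightarrow> _)" assume "x \<in> Sigma UNIV (\<lambda>m. PiE {..<m} (\<lambda>_. I))"
  thus "set (case x of (m, \<tau>) \<Rightarrow> concat (map (\<lambda>k. v (\<tau> k)) [0..<m])) \<subseteq> Basis"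
    using F by (auto simp: fam_def PiE_iff)
next
  fix u :: 'a assume u: "norm u < r"
  define T where "T i = c i * mon (v i) u" for i
  define P where "P = (\<Sum>i\<in>I. T i)"
  define M where "M = (\<Sum>i\<in>I. \<bar>T i\<bar>)"
  have hsP: "(T has_sum p (z0 + u) - t0) I" unfolding T_def using F u by (auto simp: fam_def)
  have hsP2: "(T has_sum P) I" unfolding P_def using I by (rule has_sum_finite)
  have P: "P = p (z0 + u) - t0" using has_sum_unique[OF hsP2 hsP] .
  have Mlt: "M < \<rho>" using maj[OF u] by (simp add: M_def T_def)
  have M0: "M \<ge> 0" by (simp add: M_def sum_nonneg)
  have PM: "\<bar>P\<bar> \<le> M" unfolding P_def M_def by (rule sum_abs)
  have eq: "(case x of (m, \<tau>) \<Rightarrow> hc m * (\<Prod>k<m. c (\<tau> k))) * mon (case x of (m, \<tau>) \<Rightarrow> concat (map (\<lambda>k. v (\<tau> k)) [0..<m])) u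
      = hc (fst x) * (\<Prod>k<fst x. T (snd x k))" for x
    by (cases x) (simp add: mon_concat T_def prod.distrib)
  have fin: "finite (PiE {..<m} (\<lambda>_. I))" for m :: nat using I by (intro finite_PiE) auto
  have sumP: "(\<Sum>\<tau>\<in>PiE {..<m} (\<lambda>_. I). \<Prod>k<m. T (\<tau> k)) = P ^ m" for m :: nat
    using prod_sum_PiE[of "{..<m}" "\<lambda>_. I" "\<lambda>_ i. T i"] I by (simp add: P_def)
  have sumM: "(\<Sum>\<tau>\<in>PiE {..<m} (\<lambda>_. I). \<Prod>k<m. \<bar>T (\<tau> k)\<bar>) = M ^ m" for m :: nat
    using prod_sum_PiE[of "{..<m}" "\<lambda>_. I" "\<lambda>_ i. \<bar>T i\<bar>"] I by (simp add: M_def)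
  have absP: "(\<lambda>x. norm (hc (fst x) * (\<Prod>k<fst x. T (snd x k)))) summable_on Sigma UNIV (\<lambda>m. PiE {..<m} (\<lambda>_. I))"
  proof (rule Infinite_Sum.abs_summable_on_Sigma_iff[THEN iffD2], intro conjI ballI)
    fix m :: nat
    show "(\<lambda>y. norm (hc (fst (m, y)) * (\<Prod>k<fst (m, y). T (snd (m, y) k)))) summable_on PiE {..<m} (\<lambda>_. I)"
      using fin by simp
  next
    have e: "infsum (\<lambda>y. norm (hc (fst (m, y)) * (\<Prod>k<fst (m, y). T (snd (m, y) k)))) (PiE {..<m} (\<lambda>_. I))
        = \<bar>hc m\<bar> * M ^ m" for m :: nat
      using fin[of m] by (simp add: abs_mult abs_prod sum_distrib_left[symmetric] sumM)
    have tM: "\<bar>(t0 + M) - t0\<bar> < \<rho>" using Mlt M0 by simp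
    have "summable (\<lambda>m. \<bar>hc m\<bar> * M ^ m)" using conjunct1[OF H[OF tM]] M0 by simp
    hence "(\<lambda>m. \<bar>hc m\<bar> * M ^ m) summable_on UNIV"
      using summable_on_UNIV_nonneg_real_iff[of "\<lambda>m. \<bar>hc m\<bar> * M ^ m"] M0 by simp
    thus "(\<lambda>x. norm (infsum (\<lambda>y. norm (hc (fst (x, y)) * (\<Prod>k<fst (x, y). T (snd (x, y) k)))) (PiE {..<x} (\<lambda>_. I)))) summable_on UNIV"
      unfolding e using M0 by (simp add: abs_mult)
  qed
  show "(\<lambda>x. norm ((case x of (m, \<tau>) \<Rightarrow> hc m * (\<Prod>k<m. c (\<tau> k))) * mon (case x of (m, \<tau>) \<Rightarrow> concat (map (\<lambda>k. v (\<tau> k)) [0..<m])) u)) summable_on Sigma UNIV (\<lambda>m. PiE {..<m} (\<lambda>_. I))"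
    unfolding eq using absP .
  have "((\<lambda>x. hc (fst x) * (\<Prod>k<fst x. T (snd x k))) has_sum h (p (z0 + u))) (Sigma UNIV (\<lambda>m. PiE {..<m} (\<lambda>_. I)))"
  proof (rule sigma_helper[OF absP])
    fix m :: nat
    show "((\<lambda>y. hc (fst (m, y)) * (\<Prod>k<fst (m, y). T (snd (m, y) k))) has_sum hc m * P ^ m) (PiE {..<m} (\<lambda>_. I))"
      using has_sum_finite[OF fin[of m], of "\<lambda>y. hc m * (\<Prod>k<m. T (y k))"]
      by (simp add: sum_distrib_left[symmetric] sumP)
  next
    have tP: "\<bar>p (z0 + u) - t0\<bar> < \<rho>" using PM Mlt P by simp
    from H[OF tP] have s1: "summable (\<lambda>m. \<bar>hc m\<bar> * \<bar>P\<bar>^m)" and s2: "(\<lambda>m. hc m * P^m) sums h (p (z0 + u))"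
      using P by auto
    show "((\<lambda>m. hc m * P ^ m) has_sum h (p (z0 + u))) UNIV"
      by (rule norm_summable_imp_has_sum[OF _ s2]) (use s1 in \<open>simp add: abs_mult power_abs\<close>)
  qed
  thus "((\<lambda>x. (case x of (m, \<tau>) \<Rightarrow> hc m * (\<Prod>k<m. c (\<tau> k))) * mon (case x of (m, \<tau>) \<Rightarrow> concat (map (\<lambda>k. v (\<tau> k)) [0..<m])) u) has_sum h (p (z0 + u))) (Sigma UNIV (\<lambda>m. PiE {..<m} (\<lambda>_. I)))"
    unfolding eq .
qed

lemma fam_cong: "fam I c v f z0 r \<Longrightarrow> (\<And>z. f z = g z) \<Longrightarrow> fam I c v g z0 r"
proof -
  assume "fam I c v f z0 r" "\<And>z. f z = g z"
  moreover have "f = g" using \<open>\<And>z. f z = g z\<close> by auto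
  ultimately show ?thesis by simp
qed

lemma sum_bool_prod: "finite A \<Longrightarrow> sum f (A \<times> (UNIV::bool set)) = (\<Sum>a\<in>A. f (a, True) + f (a, False))"
proof -
  assume A: "finite A"
  have "sum f (A \<times> (UNIV::bool set)) = (\<Sum>a\<in>A. \<Sum>t\<in>(UNIV::bool set). f (a, t))"
    by (rule sum.cartesian_product[symmetric, of "\<lambda>a t. f (a, t)", simplified])
  thus ?thesis by (simp add: UNIV_bool add.commute)
qed

lemma fam_normsq:
  fixes z0 :: "'a::euclidean_space \<times> 'b::euclidean_space"
  shows "fam (Basis \<times> UNIV) (\<lambda>(b,t). if t then 2 * (fst z0 \<bullet> b) else 1)
           (\<lambda>(b,t). if t then [(b,0)] else [(b,0),(b,0)])
           (\<lambda>z. norm (fst z)^2 - norm (fst z0)^2) z0 r"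
  unfolding fam_def
proof (intro conjI allI impI ballI)
  fix x :: "'a \<times> bool" assume "x \<in> Basis \<times> UNIV"
  thus "set (case x of (b, t) \<Rightarrow> if t then [(b, 0)] else [(b, 0), (b, 0)]) \<subseteq> Basis"
    by (auto simp: Basis_prod_def split: if_splits)
next
  fix u :: "'a \<times> 'b"
  let ?T = "\<lambda>x. (case x of (b, t) \<Rightarrow> if t then 2 * (fst z0 \<bullet> b) else 1) *
      mon (case x of (b, t) \<Rightarrow> if t then [(b, 0)] else [(b, 0), (b, 0)]) u"
  have fin: "finite (Basis \<times> (UNIV :: bool set))" by simp
  show "(\<lambda>x. norm (?T x)) summable_on Basis \<times> UNIV" using fin by simp
  have ip: "u \<bullet> (b, 0) = fst u \<bullet> b" for b :: 'a by (cases u) simp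
  have "sum ?T (Basis \<times> UNIV) = (\<Sum>b\<in>Basis. 2 * (fst z0 \<bullet> b) * (fst u \<bullet> b) + (fst u \<bullet> b) * (fst u \<bullet> b))"
    by (simp add: sum_bool_prod ip)
  also have "\<dots> = 2 * (fst z0 \<bullet> fst u) + fst u \<bullet> fst u"
    by (simp add: sum.distrib euclidean_inner[of "fst z0" "fst u"] euclidean_inner[of "fst u" "fst u"]
        sum_distrib_left mult.assoc)
  also have "\<dots> = norm (fst (z0 + u))^2 - norm (fst z0)^2"
    by (simp add: power2_norm_eq_inner inner_add_left inner_add_right inner_commute)
  finally show "(?T has_sum norm (fst (z0 + u))^2 - norm (fst z0)^2) (Basis \<times> UNIV)"
    by (intro has_sum_finiteI) auto
qed

lemma normsq_maj:
  fixes z0 u :: "'a::euclidean_space \<times> 'b::euclidean_space"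
  shows "(\<Sum>x\<in>Basis \<times> UNIV. \<bar>(case x of (b, t) \<Rightarrow> if t then 2 * (fst z0 \<bullet> b) else 1) *
      mon (case x of (b, t) \<Rightarrow> if t then [(b, 0)] else [(b, 0), (b, 0)]) u\<bar>)
    \<le> (2 * (\<Sum>b\<in>Basis. \<bar>fst z0 \<bullet> b\<bar>)) * norm u + real DIM('a) * norm u ^ 2"
proof -
  have ip: "u \<bullet> (b, 0) = fst u \<bullet> b" for b :: 'a by (cases u) simp
  have le: "\<bar>fst u \<bullet> b\<bar> \<le> norm u" if "b \<in> Basis" for b :: 'a
    using Basis_le_norm[OF that, of "fst u"] norm_fst_le[of "fst u" "snd u"] by simp
  have "(\<Sum>x\<in>Basis \<times> UNIV. \<bar>(case x of (b, t) \<Rightarrow> if t then 2 * (fst z0 \<bullet> b) else 1) *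
      mon (case x of (b, t) \<Rightarrow> if t then [(b, 0)] else [(b, 0), (b, 0)]) u\<bar>)
     = (\<Sum>b\<in>Basis. 2 * \<bar>fst z0 \<bullet> b\<bar> * \<bar>fst u \<bullet> b\<bar> + \<bar>fst u \<bullet> b\<bar> * \<bar>fst u \<bullet> b\<bar>)"
    by (simp add: sum_bool_prod ip abs_mult)
  also have "\<dots> \<le> (\<Sum>b\<in>Basis. 2 * \<bar>fst z0 \<bullet> b\<bar> * norm u + norm u * norm u)"
    by (intro sum_mono add_mono mult_left_mono mult_mono le) auto
  also have "\<dots> = (2 * (\<Sum>b\<in>Basis. \<bar>fst z0 \<bullet> b\<bar>)) * norm u + real DIM('a) * norm u ^ 2"
    by (simp add: sum.distrib sum_distrib_left sum_distrib_right power2_eq_square mult.assoc)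
  finally show ?thesis .
qed



definition Gfun :: "real \<Rightarrow> ('a::euclidean_space \<times> 'a \<times> 'a \<times> 'a \<times> 'a) \<Rightarrow> 'a" where
  "Gfun \<beta> z = (hfun \<beta> (norm (fst z)^2) * inner (fst (snd (snd z))) (fst (snd (snd (snd z))))) *\<^sub>R snd (snd (snd (snd z)))"

lemma Gfun_analytic:
  "real_analytic_on (Gfun \<beta> :: ('a::euclidean_space \<times> 'a \<times> 'a \<times> 'a \<times> 'a) \<Rightarrow> 'a)
     {(a, b, c, d, e). norm a \<noteq> 0 \<and> norm a \<noteq> 1}"
  unfolding real_analytic_on_def
proof (intro conjI ballI)
  let ?S = "{(a, b, c, d, e). norm a \<noteq> 0 \<and> norm a \<noteq> 1} :: ('a \<times> 'a \<times> 'a \<times> 'a \<times> 'a) set"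
  have "?S = {z. norm (fst z) \<noteq> 0} \<inter> {z. norm (fst z) \<noteq> 1}" by auto
  moreover have "open {z::('a \<times> 'a \<times> 'a \<times> 'a \<times> 'a). norm (fst z) \<noteq> 0}"
    by (rule open_Collect_neq) (intro continuous_intros)+
  moreover have "open {z::('a \<times> 'a \<times> 'a \<times> 'a \<times> 'a). norm (fst z) \<noteq> 1}"
    by (rule open_Collect_neq) (intro continuous_intros)+
  ultimately show "open ?S" by auto
next
  fix q :: 'a assume q: "q \<in> Basis"
  show "real_analytic_on_real (\<lambda>z. Gfun \<beta> z \<bullet> q) {(a, b, c, d, e). norm a \<noteq> 0 \<and> norm a \<noteq> 1}"
    unfolding real_analytic_on_real_def
  proof
    fix z0 :: "'a \<times> 'a \<times> 'a \<times> 'a \<times> 'a"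
    assume z0: "z0 \<in> {(a, b, c, d, e). norm a \<noteq> 0 \<and> norm a \<noteq> 1}"
    define t0 where "t0 = norm (fst z0)^2"
    have n0: "norm (fst z0) \<noteq> 0" "norm (fst z0) \<noteq> 1" using z0 by (auto simp: case_prod_unfold)
    have nn: "norm (fst z0) \<ge> 0" by simp
    have t0a: "t0 \<noteq> 1"
    proof
      assume "t0 = 1" hence "norm (fst z0) = 1 \<or> norm (fst z0) = -1" by (simp add: t0_def power2_eq_1_iff)
      thus False using n0 nn by linarith
    qed
    have t0: "t0 > 0" "t0 \<noteq> 1" using n0 t0a by (auto simp: t0_def)
    obtain \<rho> hc where \<rho>: "\<rho> > 0" and H: "\<And>t. \<bar>t - t0\<bar> < \<rho> \<Longrightarrow>
        summable (\<lambda>m. \<bar>hc m\<bar> * \<bar>t - t0\<bar>^m) \<and> (\<lambda>m. hc m * (t - t0)^m) sums hfun \<beta> t"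
      using hfun_series[OF t0, of \<beta>] by blast
    define C where "C = 2 * (\<Sum>b\<in>Basis. \<bar>fst z0 \<bullet> b\<bar>)"
    define D where "D = real DIM('a)"
    have C0: "C \<ge> 0" by (simp add: C_def sum_nonneg)
    have D0: "D \<ge> 0" by (simp add: D_def)
    define r where "r = min 1 (\<rho> / (C + D + 1))"
    have r0: "r > 0" using \<rho> C0 D0 by (simp add: r_def)
    have maj: "(\<Sum>x\<in>Basis \<times> UNIV. \<bar>(case x of (b, t) \<Rightarrow> if t then 2 * (fst z0 \<bullet> b) else 1) *
      mon (case x of (b, t) \<Rightarrow> if t then [(b, 0)] else [(b, 0), (b, 0)]) u\<bar>) < \<rho>"
      if u: "norm u < r" for u :: "'a \<times> 'a \<times> 'a \<times> 'a \<times> 'a"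
    proof -
      have n1: "norm u < 1" and n2: "norm u < \<rho> / (C + D + 1)" using u by (auto simp: r_def)
      have "norm u ^ 2 \<le> norm u" using n1 by (simp add: power2_eq_square mult_left_le_one_le)
      hence "D * norm u ^ 2 \<le> D * norm u" using D0 by (rule mult_left_mono)
      moreover have "(C + D + 1) * norm u = C * norm u + D * norm u + norm u" by (simp add: algebra_simps)
      moreover have "0 \<le> norm u" by simp
      ultimately have "C * norm u + D * norm u ^ 2 \<le> (C + D + 1) * norm u" by linarith
      also have "\<dots> < \<rho>" using n2 C0 D0 by (simp add: field_simps)
      finally show ?thesis using normsq_maj[of z0 u] unfolding C_def D_def by linarith
    qed
    have Fh: "fam (Sigma UNIV (\<lambda>m. PiE {..<m} (\<lambda>_. Basis \<times> (UNIV::bool set))))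
       (\<lambda>(m,\<tau>). hc m * (\<Prod>k<m. (\<lambda>(b,t). if t then 2 * (fst z0 \<bullet> b) else 1) (\<tau> k)))
       (\<lambda>(m,\<tau>). concat (map (\<lambda>k. (\<lambda>(b,t). if t then [(b,0)] else [(b,0),(b,0)]) (\<tau> k)) [0..<m]))
       (\<lambda>z. hfun \<beta> (norm (fst z)^2)) z0 r"
    proof -
      have Fn: "fam (Basis \<times> UNIV) (\<lambda>(b,t). if t then 2 * (fst z0 \<bullet> b) else 1)
           (\<lambda>(b,t). if t then [(b,0)] else [(b,0),(b,0)])
           (\<lambda>z. norm (fst z)^2 - t0) z0 r"
        unfolding t0_def by (rule fam_normsq)
      show ?thesis by (rule fam_comp[OF _ Fn maj H]) simp_all
    qed
    have Fi: "fam (Sigma Basis (\<lambda>_. (insert None (Some ` Basis)) \<times> (insert None (Some ` Basis))))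
       (\<lambda>(j,i). (\<lambda>(i1,i2). (case i1 of None \<Rightarrow> z0 \<bullet> (0,0,j,0,0) | Some b \<Rightarrow> (0,0,j,0,0) \<bullet> b) *
                         (case i2 of None \<Rightarrow> z0 \<bullet> (0,0,0,j,0) | Some b \<Rightarrow> (0,0,0,j,0) \<bullet> b)) i)
       (\<lambda>(j,i). (\<lambda>(i1,i2). (case i1 of None \<Rightarrow> [] | Some b \<Rightarrow> [b]) @ (case i2 of None \<Rightarrow> [] | Some b \<Rightarrow> [b])) i)
       (\<lambda>z. inner (fst (snd (snd z))) (fst (snd (snd (snd z))))) z0 r"
    proof (rule fam_cong)
      show "fam (Sigma Basis (\<lambda>_. (insert None (Some ` Basis)) \<times> (insert None (Some ` Basis))))
       (\<lambda>(j,i). (\<lambda>(i1,i2). (case i1 of None \<Rightarrow> z0 \<bullet> (0,0,j,0,0) | Some b \<Rightarrow> (0,0,j,0,0) \<bullet> b) *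
                         (case i2 of None \<Rightarrow> z0 \<bullet> (0,0,0,j,0) | Some b \<Rightarrow> (0,0,0,j,0) \<bullet> b)) i)
       (\<lambda>(j,i). (\<lambda>(i1,i2). (case i1 of None \<Rightarrow> [] | Some b \<Rightarrow> [b]) @ (case i2 of None \<Rightarrow> [] | Some b \<Rightarrow> [b])) i)
       (\<lambda>z. \<Sum>j\<in>Basis. (z \<bullet> (0,0,j,0,0)) * (z \<bullet> (0,0,0,j,0))) z0 r"
        apply (rule fam_sum)
         apply simp
        apply (rule fam_mult[OF fam_lin fam_lin])
        done
    next
      fix z :: "'a \<times> 'a \<times> 'a \<times> 'a \<times> 'a"
      show "(\<Sum>j\<in>Basis. (z \<bullet> (0,0,j,0,0)) * (z \<bullet> (0,0,0,j,0))) = inner (fst (snd (snd z))) (fst (snd (snd (snd z))))"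
        by (cases z) (simp add: euclidean_inner[symmetric])
    qed
    have Fe: "fam (insert None (Some ` Basis)) (\<lambda>i. case i of None \<Rightarrow> z0 \<bullet> (0,0,0,0,q) | Some b \<Rightarrow> (0,0,0,0,q) \<bullet> b)
           (\<lambda>i. case i of None \<Rightarrow> [] | Some b \<Rightarrow> [b]) (\<lambda>z. snd (snd (snd (snd z))) \<bullet> q) z0 r"
      apply (rule fam_cong[OF fam_lin])
      subgoal for z by (cases z) simp
      done
    have eqG: "\<And>z. hfun \<beta> (norm (fst z)^2) * inner (fst (snd (snd z))) (fst (snd (snd (snd z)))) *
        (snd (snd (snd (snd z))) \<bullet> q) = Gfun \<beta> z \<bullet> q" by (simp add: Gfun_def)
    note Fall = fam_cong[OF fam_mult[OF fam_mult[OF Fh Fi] Fe] eqG]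
    obtain c' where "\<forall>y\<in>ball z0 r. ((\<lambda>k. c' k * (\<Prod>b\<in>Basis. ((y - z0) \<bullet> b) ^ k b)) has_sum Gfun \<beta> y \<bullet> q)
            {k. \<forall>b. b \<notin> Basis \<longrightarrow> k b = 0}"
      using regroup[OF Fall] by blast
    thus "\<exists>r>0. \<exists>c. \<forall>y\<in>ball z0 r. ((\<lambda>k. c k * (\<Prod>b\<in>Basis. ((y - z0) \<bullet> b) ^ k b)) has_sum Gfun \<beta> y \<bullet> q)
            {k. \<forall>b. b \<notin> Basis \<longrightarrow> k b = 0}"
      using r0 by blast
  qed
qed

lemma int_lemma:
  fixes f :: "real \<Rightarrow> 'v::euclidean_space" and e :: "'w::real_normed_vector"
  assumes "continuous_on {0..1} f"
  shows "integral {0..1} (\<lambda>s. (k1 + k2 * (f s \<bullet> d)) *\<^sub>R e) = (k1 + k2 * (integral {0..1} f \<bullet> d)) *\<^sub>R e"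
proof -
  have "(f has_integral integral {0..1} f) {0..1}"
    using integrable_continuous_real[OF assms] by (rule integrable_integral)
  hence "((\<lambda>s. f s \<bullet> d) has_integral (integral {0..1} f \<bullet> d)) {0..1}"
    using has_integral_linear[OF _ bounded_linear_inner_left] by (simp add: o_def)
  hence "((\<lambda>s. k2 * (f s \<bullet> d)) has_integral k2 * (integral {0..1} f \<bullet> d)) {0..1}"
    by (rule has_integral_mult_right)
  moreover have "((\<lambda>s. k1) has_integral k1) {0..1::real}"
    using has_integral_const_real[of k1 0 1] by simp
  ultimately have "((\<lambda>s. k1 + k2 * (f s \<bullet> d)) has_integral (k1 + k2 * (integral {0..1} f \<bullet> d))) {0..1}"
    using has_integral_add by blast
  hence "((\<lambda>s. (k1 + k2 * (f s \<bullet> d)) *\<^sub>R e) has_integral (k1 + k2 * (integral {0..1} f \<bullet> d)) *\<^sub>R e) {0..1}"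
    by (rule has_integral_scaleR_left)
  thus ?thesis by (rule integral_unique)
qed

lemma smooth_D:
  assumes "smooth_fun g"
  obtains D where "D 0 = g" "\<And>k t. (D k has_vector_derivative D (Suc k) t) (at t)"
  using assms unfolding smooth_fun_def by blast

lemma orth:
  fixes U A :: "real \<Rightarrow> 'a::real_inner"
  assumes dU: "\<And>t. (U has_vector_derivative A t) (at t)" and n: "\<And>t. norm (U t) = 1"
  shows "A x \<bullet> U x = 0"
proof -
  have d1: "((\<lambda>t. U t \<bullet> U t) has_derivative (\<lambda>h. U x \<bullet> (h *\<^sub>R A x) + (h *\<^sub>R A x) \<bullet> U x)) (at x)"
    using has_derivative_inner[OF dU[unfolded has_vector_derivative_def] dU[unfolded has_vector_derivative_def]] .
  have "(\<lambda>t. U t \<bullet> U t) = (\<lambda>t. 1)" using n by (auto simp: dot_square_norm)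
  hence d2: "((\<lambda>t. U t \<bullet> U t) has_derivative (\<lambda>h. 0)) (at x)" by simp
  have "(\<lambda>h. U x \<bullet> (h *\<^sub>R A x) + (h *\<^sub>R A x) \<bullet> U x) = (\<lambda>h. 0)" by (rule has_derivative_unique[OF d1 d2])
  hence "U x \<bullet> (1 *\<^sub>R A x) + (1 *\<^sub>R A x) \<bullet> U x = 0" by metis
  thus ?thesis by (simp add: inner_commute)
qed

lemma periodic_int:
  fixes g :: "real \<Rightarrow> 'a"
  assumes p: "\<And>x. g (x + 1) = g x"
  shows "g (t + of_int k) = g t"
proof -
  have pn: "g (s + real n) = g s" for s n
  proof (induction n)
    case 0 thus ?case by simp
  next
    case (Suc n)
    have "g (s + real (Suc n)) = g ((s + real n) + 1)" by (simp add: algebra_simps)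
    also have "\<dots> = g (s + real n)" by (rule p)
    finally show ?case using Suc by simp
  qed
  show ?thesis
  proof (cases "k \<ge> 0")
    case True then obtain n where "k = int n" by (metis nonneg_int_cases)
    thus ?thesis using pn by simp
  next
    case False then obtain n where "k = - int n" by (metis linorder_not_le nonpos_int_cases order.strict_implies_order)
    hence "g (t + of_int k) = g ((t + of_int k) + real n)" using pn[of "t + of_int k" n] by simp
    also have "\<dots> = g t" using \<open>k = - int n\<close> by simp
    finally show ?thesis .
  qed
qed

lemma curve_inj:
  fixes g :: "real \<Rightarrow> 'a"
  assumes p: "\<And>x. g (x + 1) = g x" and inj: "inj_on g {0..<1}"
    and w: "w \<noteq> 0" "\<bar>w\<bar> \<le> 1/2"
  shows "g (x + w) \<noteq> g x"
proof
  assume eq: "g (x + w) = g x"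
  define x' where "x' = x - of_int \<lfloor>x\<rfloor>"
  define y' where "y' = (x + w) - of_int \<lfloor>x + w\<rfloor>"
  have gx: "g x' = g x" using periodic_int[of g, OF p, of x' "\<lfloor>x\<rfloor>"] by (simp add: x'_def)
  have gy: "g y' = g (x + w)" using periodic_int[of g, OF p, of y' "\<lfloor>x + w\<rfloor>"] by (simp add: y'_def)
  have "x' \<in> {0..<1}" "y' \<in> {0..<1}" unfolding x'_def y'_def atLeastLessThan_iff
    using floor_correct[of x] floor_correct[of "x+w"] of_int_add[of "\<lfloor>x\<rfloor>" 1] of_int_add[of "\<lfloor>x+w\<rfloor>" 1]
    by (auto simp del: of_int_add)
  hence "x' = y'" using inj_onD[OF inj, of x' y'] gx gy eq by auto
  hence wi: "w = of_int (\<lfloor>x + w\<rfloor> - \<lfloor>x\<rfloor>)" by (simp add: x'_def y'_def)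
  define k where "k = \<lfloor>x + w\<rfloor> - \<lfloor>x\<rfloor>"
  have "k \<noteq> 0" using w wi by (auto simp: k_def)
  hence "\<bar>of_int k :: real\<bar> \<ge> 1" by linarith
  thus False using w wi k_def by simp
qed

lemma scalar_identity:
  fixes w n \<alpha> :: real
  assumes w: "w \<noteq> 0" and n: "n > 0"
  shows "(1 / \<bar>w\<bar> powr (\<alpha> - 2)) * ((2 * hfun (\<alpha>/2) (n^2) / w^2) + (- 2 * hfun (\<alpha>/2) (n^2) / w^2) * n^2)
       = 1 / (\<bar>w\<bar> * n) powr \<alpha> - 1 / \<bar>w\<bar> powr \<alpha>"
proof -
  define P where "P = n powr \<alpha>"
  have P0: "P > 0" using n by (simp add: P_def)
  have n2: "n^2 = n powr 2" using powr_realpow[OF n, of 2] by simp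
  have nP: "(n^2) powr (\<alpha>/2) = P" unfolding n2 P_def powr_powr by simp
  have aw: "\<bar>w\<bar> > 0" using w by simp
  have ww: "\<bar>w\<bar> powr (\<alpha> - 2) * w^2 = \<bar>w\<bar> powr \<alpha>"
  proof -
    have "w^2 = \<bar>w\<bar> powr 2" using powr_realpow[OF aw, of 2] by simp
    moreover have "\<bar>w\<bar> powr (\<alpha> - 2) * \<bar>w\<bar> powr 2 = \<bar>w\<bar> powr (\<alpha> - 2 + 2)" by (rule powr_add[symmetric])
    ultimately show ?thesis by simp
  qed
  have wp: "\<bar>w\<bar> powr (\<alpha> - 2) > 0" using aw by simp
  have key: "2 * hfun (\<alpha>/2) (n^2) * (1 - n^2) = (1 - P) / P"
  proof (cases "n = 1")
    case True thus ?thesis by (simp add: hfun_def P_def)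
  next
    case False
    hence d: "1 - n^2 \<noteq> 0" using n by (simp add: power2_eq_1_iff)
    have "hfun (\<alpha>/2) (n^2) = (1 - P) / (2 * P * (1 - n^2))" by (simp add: hfun_def nP)
    thus ?thesis using P0 d by (simp add: divide_simps) (simp add: algebra_simps)
  qed
  have "(1 / \<bar>w\<bar> powr (\<alpha> - 2)) * ((2 * hfun (\<alpha>/2) (n^2) / w^2) + (- 2 * hfun (\<alpha>/2) (n^2) / w^2) * n^2)
      = (2 * hfun (\<alpha>/2) (n^2) * (1 - n^2)) / (\<bar>w\<bar> powr (\<alpha> - 2) * w^2)"
    using w wp by (simp add: divide_simps) (simp add: algebra_simps)
  also have "\<dots> = (1 - P) / P / \<bar>w\<bar> powr \<alpha>" by (simp add: key ww)
  also have "\<dots> = 1 / (\<bar>w\<bar> * n) powr \<alpha> - 1 / \<bar>w\<bar> powr \<alpha>"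
  proof -
    have "(\<bar>w\<bar> * n) powr \<alpha> = \<bar>w\<bar> powr \<alpha> * P" using aw n by (simp add: powr_mult P_def)
    moreover have "\<bar>w\<bar> powr \<alpha> > 0" using aw by simp
    ultimately show ?thesis using P0 by (simp add: divide_simps)
  qed
  finally show ?thesis .
qed



lemma cont_comp_line:
  fixes A :: "real \<Rightarrow> 'a::real_normed_vector"
  assumes "continuous_on UNIV A"
  shows "continuous_on S (\<lambda>\<phi>. A (p + q * \<phi> * r))"
  by (rule continuous_on_compose2[OF assms]) (auto intro!: continuous_intros)

lemma line_deriv:
  fixes U A :: "real \<Rightarrow> 'a::real_normed_vector"
  assumes dU: "\<And>t. (U has_vector_derivative A t) (at t)"
  shows "((\<lambda>\<phi>. U (p + q * \<phi> * r)) has_vector_derivative ((q * r) *\<^sub>R A (p + q * \<phi> * r))) (at \<phi>)"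
proof -
  have "((\<lambda>\<phi>. p + q * \<phi> * r) has_real_derivative (q * r)) (at \<phi>)"
    by (auto intro!: derivative_eq_intros)
  hence d: "((\<lambda>\<phi>. p + q * \<phi> * r) has_vector_derivative (q * r)) (at \<phi>)"
    by (simp add: has_real_derivative_iff_has_vector_derivative)
  show ?thesis using vector_diff_chain_at[OF d dU] by (simp add: o_def)
qed

lemma line_ftc:
  fixes U A :: "real \<Rightarrow> 'a::euclidean_space"
  assumes dU: "\<And>t. (U has_vector_derivative A t) (at t)" and cA: "continuous_on UNIV A"
  shows "(q * r) *\<^sub>R integral {0..1} (\<lambda>\<phi>. A (p + q * \<phi> * r)) = U (p + q * r) - U p"
proof -
  have I1: "((\<lambda>\<phi>. (q * r) *\<^sub>R A (p + q * \<phi> * r)) has_integral (U (p + q * 1 * r) - U (p + q * 0 * r))) {0..1}"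
    by (rule fundamental_theorem_of_calculus)
       (auto intro: has_vector_derivative_at_within line_deriv[OF dU])
  moreover have I2: "((\<lambda>\<phi>. (q * r) *\<^sub>R A (p + q * \<phi> * r)) has_integral (q * r) *\<^sub>R integral {0..1} (\<lambda>\<phi>. A (p + q * \<phi> * r))) {0..1}"
    by (rule has_integral_cmul, rule integrable_integral, rule integrable_continuous_real, rule cont_comp_line[OF cA])
  ultimately have "(q * r) *\<^sub>R integral {0..1} (\<lambda>\<phi>. A (p + q * \<phi> * r)) = U (p + q * 1 * r) - U (p + q * 0 * r)"
    by (rule has_integral_unique[rotated])
  thus ?thesis by simp
qed



lemma pointwise:
  fixes \<gamma> U A :: "real \<Rightarrow> 'a::euclidean_space" and \<alpha> w x :: real
  assumes dG: "\<And>t. (\<gamma> has_vector_derivative U t) (at t)"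
    and dU: "\<And>t. (U has_vector_derivative A t) (at t)"
    and cU: "continuous_on UNIV U" and cA: "continuous_on UNIV A"
    and nU: "\<And>t. norm (U t) = 1"
    and w: "w \<noteq> 0" and ne: "\<gamma> (x + w) \<noteq> \<gamma> x"
  shows "(1 / norm (\<gamma> (x + w) - \<gamma> x) powr \<alpha> - 1 / \<bar>w\<bar> powr \<alpha>) *\<^sub>R A x =
    (1 / \<bar>w\<bar> powr (\<alpha> - 2)) *\<^sub>R
         integral {0..1} (\<lambda>s2. integral {0..1} (\<lambda>s1.
           integral {0..1} (\<lambda>\<phi>2. integral {0..1} (\<lambda>\<phi>1.
             (s1 - s2)^2 *\<^sub>R
             Gfun (\<alpha>/2) (integral {0..1} (\<lambda>t. U (x + t * w)),
                U x,
                A (x + s2 * w + (s1 - s2) * \<phi>1 * w),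
                A (x + s2 * w + (s1 - s2) * \<phi>2 * w),
                A x)))))"
proof -
  define a where "a = integral {0..1} (\<lambda>t. U (x + t * w))"
  define h where "h = hfun (\<alpha>/2) (norm a ^ 2)"
  define e where "e = A x"
  define C where "C s1 s2 = integral {0..1} (\<lambda>\<phi>. A (x + s2 * w + (s1 - s2) * \<phi> * w))" for s1 s2
  have cAl: "continuous_on {0..1} (\<lambda>\<phi>. A (x + s2 * w + (s1 - s2) * \<phi> * w))" for s1 s2
    by (rule cont_comp_line[OF cA])
  have i1: "integral {0..1} (\<lambda>\<phi>1. (s1 - s2)^2 *\<^sub>R Gfun (\<alpha>/2) (a, U x,
                A (x + s2 * w + (s1 - s2) * \<phi>1 * w), A (x + s2 * w + (s1 - s2) * \<phi>2 * w), A x))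
        = (0 + ((s1 - s2)^2 * h) * (C s1 s2 \<bullet> A (x + s2 * w + (s1 - s2) * \<phi>2 * w))) *\<^sub>R e" for s1 s2 \<phi>2
  proof -
    have "integral {0..1} (\<lambda>\<phi>1. (s1 - s2)^2 *\<^sub>R Gfun (\<alpha>/2) (a, U x,
                A (x + s2 * w + (s1 - s2) * \<phi>1 * w), A (x + s2 * w + (s1 - s2) * \<phi>2 * w), A x))
        = integral {0..1} (\<lambda>\<phi>1. (0 + ((s1 - s2)^2 * h) * (A (x + s2 * w + (s1 - s2) * \<phi>1 * w) \<bullet> A (x + s2 * w + (s1 - s2) * \<phi>2 * w))) *\<^sub>R e)"
      by (simp add: Gfun_def h_def e_def mult.assoc)
    also have "\<dots> = (0 + ((s1 - s2)^2 * h) * (C s1 s2 \<bullet> A (x + s2 * w + (s1 - s2) * \<phi>2 * w))) *\<^sub>R e"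
      unfolding C_def by (rule int_lemma[OF cAl])
    finally show ?thesis .
  qed
  have i2: "integral {0..1} (\<lambda>\<phi>2. integral {0..1} (\<lambda>\<phi>1. (s1 - s2)^2 *\<^sub>R Gfun (\<alpha>/2) (a, U x,
                A (x + s2 * w + (s1 - s2) * \<phi>1 * w), A (x + s2 * w + (s1 - s2) * \<phi>2 * w), A x)))
        = (0 + ((s1 - s2)^2 * h) * (C s1 s2 \<bullet> C s1 s2)) *\<^sub>R e" for s1 s2
  proof -
    have "integral {0..1} (\<lambda>\<phi>2. integral {0..1} (\<lambda>\<phi>1. (s1 - s2)^2 *\<^sub>R Gfun (\<alpha>/2) (a, U x,
                A (x + s2 * w + (s1 - s2) * \<phi>1 * w), A (x + s2 * w + (s1 - s2) * \<phi>2 * w), A x)))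
        = integral {0..1} (\<lambda>\<phi>2. (0 + ((s1 - s2)^2 * h) * (A (x + s2 * w + (s1 - s2) * \<phi>2 * w) \<bullet> C s1 s2)) *\<^sub>R e)"
      by (simp only: i1 inner_commute[of "C s1 s2"])
    also have "\<dots> = (0 + ((s1 - s2)^2 * h) * (C s1 s2 \<bullet> C s1 s2)) *\<^sub>R e"
      unfolding C_def by (rule int_lemma[OF cAl])
    finally show ?thesis .
  qed
  have ftc2: "((s1 - s2) * w) *\<^sub>R C s1 s2 = U (x + s1 * w) - U (x + s2 * w)" for s1 s2
  proof -
    have "((s1 - s2) * w) *\<^sub>R C s1 s2 = U (x + s2 * w + (s1 - s2) * w) - U (x + s2 * w)"
      unfolding C_def by (rule line_ftc[OF dU cA])
    moreover have "x + s2 * w + (s1 - s2) * w = x + s1 * w" by (simp add: algebra_simps)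
    ultimately show ?thesis by simp
  qed
  have cc: "(s1 - s2)^2 * (C s1 s2 \<bullet> C s1 s2) = (2 - 2 * (U (x + s1 * w) \<bullet> U (x + s2 * w))) / w^2" for s1 s2
  proof -
    have "w^2 * ((s1 - s2)^2 * (C s1 s2 \<bullet> C s1 s2)) = (((s1 - s2) * w) *\<^sub>R C s1 s2) \<bullet> (((s1 - s2) * w) *\<^sub>R C s1 s2)"
      by (simp add: power2_eq_square algebra_simps)
    also have "\<dots> = (U (x + s1 * w) - U (x + s2 * w)) \<bullet> (U (x + s1 * w) - U (x + s2 * w))" by (simp only: ftc2)
    also have "\<dots> = 2 - 2 * (U (x + s1 * w) \<bullet> U (x + s2 * w))"
    proof -
      have u1: "U (x + s1 * w) \<bullet> U (x + s1 * w) = 1" using nU[of "x + s1 * w"] power2_norm_eq_inner[of "U (x + s1 * w)"] by simp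
      have u2: "U (x + s2 * w) \<bullet> U (x + s2 * w) = 1" using nU[of "x + s2 * w"] power2_norm_eq_inner[of "U (x + s2 * w)"] by simp
      show ?thesis unfolding inner_diff_left inner_diff_right u1 u2 inner_commute[of "U (x + s2 * w)" "U (x + s1 * w)"]
        by simp
    qed
    finally show ?thesis using w by (simp add: field_simps)
  qed
  have cUl: "continuous_on {0..1} (\<lambda>s. U (x + s * w))"
    by (rule continuous_on_compose2[OF cU]) (auto intro!: continuous_intros)
  have i3: "integral {0..1} (\<lambda>s1. integral {0..1} (\<lambda>\<phi>2. integral {0..1} (\<lambda>\<phi>1. (s1 - s2)^2 *\<^sub>R Gfun (\<alpha>/2) (a, U x,
                A (x + s2 * w + (s1 - s2) * \<phi>1 * w), A (x + s2 * w + (s1 - s2) * \<phi>2 * w), A x))))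
        = (2 * h / w^2 + (- 2 * h / w^2) * (a \<bullet> U (x + s2 * w))) *\<^sub>R e" for s2
  proof -
    have "integral {0..1} (\<lambda>s1. integral {0..1} (\<lambda>\<phi>2. integral {0..1} (\<lambda>\<phi>1. (s1 - s2)^2 *\<^sub>R Gfun (\<alpha>/2) (a, U x,
                A (x + s2 * w + (s1 - s2) * \<phi>1 * w), A (x + s2 * w + (s1 - s2) * \<phi>2 * w), A x))))
        = integral {0..1} (\<lambda>s1. (2 * h / w^2 + (- 2 * h / w^2) * (U (x + s1 * w) \<bullet> U (x + s2 * w))) *\<^sub>R e)"
    proof (rule integral_cong)
      fix s1
      have "0 + ((s1 - s2)^2 * h) * (C s1 s2 \<bullet> C s1 s2) = h * ((s1 - s2)^2 * (C s1 s2 \<bullet> C s1 s2))" by simp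
      also have "\<dots> = 2 * h / w^2 + (- 2 * h / w^2) * (U (x + s1 * w) \<bullet> U (x + s2 * w))"
        unfolding cc using w by (simp add: field_simps)
      finally show "integral {0..1} (\<lambda>\<phi>2. integral {0..1} (\<lambda>\<phi>1. (s1 - s2)^2 *\<^sub>R Gfun (\<alpha>/2) (a, U x,
                A (x + s2 * w + (s1 - s2) * \<phi>1 * w), A (x + s2 * w + (s1 - s2) * \<phi>2 * w), A x)))
          = (2 * h / w^2 + (- 2 * h / w^2) * (U (x + s1 * w) \<bullet> U (x + s2 * w))) *\<^sub>R e"
        by (simp only: i2)
    qed
    also have "\<dots> = (2 * h / w^2 + (- 2 * h / w^2) * (a \<bullet> U (x + s2 * w))) *\<^sub>R e"
      unfolding a_def by (rule int_lemma[OF cUl])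
    finally show ?thesis .
  qed
  have i4: "integral {0..1} (\<lambda>s2. integral {0..1} (\<lambda>s1. integral {0..1} (\<lambda>\<phi>2. integral {0..1} (\<lambda>\<phi>1. (s1 - s2)^2 *\<^sub>R Gfun (\<alpha>/2) (a, U x,
                A (x + s2 * w + (s1 - s2) * \<phi>1 * w), A (x + s2 * w + (s1 - s2) * \<phi>2 * w), A x)))))
        = (2 * h / w^2 + (- 2 * h / w^2) * (a \<bullet> a)) *\<^sub>R e"
  proof -
    have "integral {0..1} (\<lambda>s2. integral {0..1} (\<lambda>s1. integral {0..1} (\<lambda>\<phi>2. integral {0..1} (\<lambda>\<phi>1. (s1 - s2)^2 *\<^sub>R Gfun (\<alpha>/2) (a, U x,
                A (x + s2 * w + (s1 - s2) * \<phi>1 * w), A (x + s2 * w + (s1 - s2) * \<phi>2 * w), A x)))))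
        = integral {0..1} (\<lambda>s2. (2 * h / w^2 + (- 2 * h / w^2) * (U (x + s2 * w) \<bullet> a)) *\<^sub>R e)"
      by (simp only: i3 inner_commute[of a])
    also have "\<dots> = (2 * h / w^2 + (- 2 * h / w^2) * (a \<bullet> a)) *\<^sub>R e"
      unfolding a_def by (rule int_lemma[OF cUl])
    finally show ?thesis .
  qed
  have ftc1: "w *\<^sub>R a = \<gamma> (x + w) - \<gamma> x"
    using line_ftc[OF dG cU, of 1 w x] by (simp add: a_def)
  have na: "norm (\<gamma> (x + w) - \<gamma> x) = \<bar>w\<bar> * norm a" by (simp flip: ftc1)
  have a0: "norm a > 0" using ftc1 ne by auto
  have sc: "(1 / \<bar>w\<bar> powr (\<alpha> - 2)) * (2 * h / w^2 + (- 2 * h / w^2) * (a \<bullet> a))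
       = 1 / norm (\<gamma> (x + w) - \<gamma> x) powr \<alpha> - 1 / \<bar>w\<bar> powr \<alpha>"
    unfolding na h_def using scalar_identity[OF w a0, of \<alpha>] by (simp add: dot_square_norm)
  show ?thesis
    unfolding a_def[symmetric] i4 scaleR_scaleR sc e_def ..
qed



lemma identity:
  fixes \<gamma> :: "real \<Rightarrow> real^'n" and \<alpha> \<epsilon> x :: real
  assumes curve: "arclength_simple_closed_curve \<gamma>" and \<epsilon>: "0 < \<epsilon>" "\<epsilon> \<le> 1/2"
  shows "Pperp (dot \<gamma> x) (R2 \<alpha> \<epsilon> \<gamma> x) =
       integral {w. \<epsilon> \<le> \<bar>w\<bar> \<and> \<bar>w\<bar> \<le> 1/2} (\<lambda>w.
         (1 / \<bar>w\<bar> powr (\<alpha> - 2)) *\<^sub>R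
         integral {0..1} (\<lambda>s2. integral {0..1} (\<lambda>s1.
           integral {0..1} (\<lambda>\<phi>2. integral {0..1} (\<lambda>\<phi>1.
             (s1 - s2)^2 *\<^sub>R
             Gfun (\<alpha>/2) (integral {0..1} (\<lambda>t. dot \<gamma> (x + t * w)),
                dot \<gamma> x,
                ddot \<gamma> (x + s2 * w + (s1 - s2) * \<phi>1 * w),
                ddot \<gamma> (x + s2 * w + (s1 - s2) * \<phi>2 * w),
                ddot \<gamma> x))))))"
proof -
  have sm: "smooth_fun \<gamma>" and per: "\<And>x. \<gamma> (x + 1) = \<gamma> x" and inj: "inj_on \<gamma> {0..<1}"
    and nd: "\<And>x. norm (dot \<gamma> x) = 1"
    using curve by (auto simp: arclength_simple_closed_curve_def)
  obtain D where D0: "D 0 = \<gamma>" and DD: "\<And>k t. (D k has_vector_derivative D (Suc k) t) (at t)"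
    using smooth_D[OF sm] by blast
  define U where "U = D 1"
  define A where "A = D 2"
  have dG: "\<And>t. (\<gamma> has_vector_derivative U t) (at t)" using DD[of 0] D0 by (simp add: U_def)
  have dU: "\<And>t. (U has_vector_derivative A t) (at t)" using DD[of 1] by (simp add: U_def A_def numeral_2_eq_2)
  have dA: "\<And>t. (A has_vector_derivative D 3 t) (at t)" using DD[of 2] by (simp add: A_def numeral_3_eq_3 numeral_2_eq_2)
  have dotU: "dot \<gamma> = U" by (rule ext) (simp add: dot_def vector_derivative_at[OF dG])
  have ddotA: "ddot \<gamma> = A" by (rule ext) (simp add: ddot_def dotU vector_derivative_at[OF dU])
  have cU: "continuous_on UNIV U"
    by (rule continuous_at_imp_continuous_on) (use has_vector_derivative_continuous[OF dU] in blast)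
  have cA: "continuous_on UNIV A"
    by (rule continuous_at_imp_continuous_on) (use has_vector_derivative_continuous[OF dA] in blast)
  have nU: "\<And>t. norm (U t) = 1" using nd by (simp add: dotU)
  have orth0: "A x \<bullet> U x = 0" by (rule orth[OF dU nU])
  define W where "W = {w::real. \<epsilon> \<le> \<bar>w\<bar> \<and> \<bar>w\<bar> \<le> 1/2}"
  define F where "F w = 1 / norm (\<gamma> (x + w) - \<gamma> x) powr \<alpha> - 1 / \<bar>w\<bar> powr \<alpha>" for w
  define I where "I = integral W (\<lambda>w. F w *\<^sub>R A x)"
  have R2I: "R2 \<alpha> \<epsilon> \<gamma> x = I" by (simp add: R2_def I_def W_def F_def ddotA)
  have IU: "I \<bullet> U x = 0"
  proof (cases "(\<lambda>w. F w *\<^sub>R A x) integrable_on W")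
    case True
    hence "((\<lambda>w. F w *\<^sub>R A x) has_integral I) W" unfolding I_def by (rule integrable_integral)
    hence "(((\<lambda>y. y \<bullet> U x) \<circ> (\<lambda>w. F w *\<^sub>R A x)) has_integral (I \<bullet> U x)) W"
      by (rule has_integral_linear[OF _ bounded_linear_inner_left])
    moreover have "((\<lambda>y. y \<bullet> U x) \<circ> (\<lambda>w. F w *\<^sub>R A x)) = (\<lambda>w. 0)" using orth0 by (simp add: o_def)
    ultimately have "((\<lambda>w. 0::real) has_integral (I \<bullet> U x)) W" by simp
    thus ?thesis using has_integral_0 has_integral_unique by blast
  next
    case False thus ?thesis by (simp add: I_def not_integrable_integral)
  qed
  have LHS: "Pperp (dot \<gamma> x) (R2 \<alpha> \<epsilon> \<gamma> x) = I" by (simp add: Pperp_def R2I dotU IU)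
  have "I = integral W (\<lambda>w.
         (1 / \<bar>w\<bar> powr (\<alpha> - 2)) *\<^sub>R
         integral {0..1} (\<lambda>s2. integral {0..1} (\<lambda>s1.
           integral {0..1} (\<lambda>\<phi>2. integral {0..1} (\<lambda>\<phi>1.
             (s1 - s2)^2 *\<^sub>R
             Gfun (\<alpha>/2) (integral {0..1} (\<lambda>t. U (x + t * w)),
                U x,
                A (x + s2 * w + (s1 - s2) * \<phi>1 * w),
                A (x + s2 * w + (s1 - s2) * \<phi>2 * w),
                A x))))))"
    unfolding I_def
  proof (rule integral_cong)
    fix w assume "w \<in> W"
    hence w0: "w \<noteq> 0" and w2: "\<bar>w\<bar> \<le> 1/2" using \<epsilon> by (auto simp: W_def)
    have ne: "\<gamma> (x + w) \<noteq> \<gamma> x" by (rule curve_inj[OF per inj w0 w2])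
    show "F w *\<^sub>R A x = (1 / \<bar>w\<bar> powr (\<alpha> - 2)) *\<^sub>R
         integral {0..1} (\<lambda>s2. integral {0..1} (\<lambda>s1.
           integral {0..1} (\<lambda>\<phi>2. integral {0..1} (\<lambda>\<phi>1.
             (s1 - s2)^2 *\<^sub>R
             Gfun (\<alpha>/2) (integral {0..1} (\<lambda>t. U (x + t * w)),
                U x,
                A (x + s2 * w + (s1 - s2) * \<phi>1 * w),
                A (x + s2 * w + (s1 - s2) * \<phi>2 * w),
                A x)))))"
      unfolding F_def by (rule pointwise[OF dG dU cU cA nU w0 ne])
  qed
  thus ?thesis using LHS by (simp add: dotU ddotA W_def)
qed


theorem theorem6p1:
  fixes \<alpha> :: real
  assumes "2 < \<alpha>" and "\<alpha> < 3"
  shows "\<exists>G :: (real^'n) \<times> (real^'n) \<times> (real^'n) \<times> (real^'n) \<times> (real^'n) \<Rightarrow> real^'n.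
    real_analytic_on G {(a, b, c, d, e). norm a \<noteq> 0 \<and> norm a \<noteq> 1} \<and>
    (\<forall>(\<gamma> :: real \<Rightarrow> real^'n) \<epsilon> x.
       arclength_simple_closed_curve \<gamma> \<and> 0 < \<epsilon> \<and> \<epsilon> \<le> 1/2 \<longrightarrow>
       Pperp (dot \<gamma> x) (R2 \<alpha> \<epsilon> \<gamma> x) =
       integral {w. \<epsilon> \<le> \<bar>w\<bar> \<and> \<bar>w\<bar> \<le> 1/2} (\<lambda>w.
         (1 / \<bar>w\<bar> powr (\<alpha> - 2)) *\<^sub>R
         integral {0..1} (\<lambda>s2. integral {0..1} (\<lambda>s1.
           integral {0..1} (\<lambda>\<phi>2. integral {0..1} (\<lambda>\<phi>1.
             (s1 - s2)^2 *\<^sub>R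
             G (integral {0..1} (\<lambda>t. dot \<gamma> (x + t * w)),
                dot \<gamma> x,
                ddot \<gamma> (x + s2 * w + (s1 - s2) * \<phi>1 * w),
                ddot \<gamma> (x + s2 * w + (s1 - s2) * \<phi>2 * w),
                ddot \<gamma> x)))))))"
  proof -
  show ?thesis
    apply (rule exI[of _ "Gfun (\<alpha>/2)"])
    apply (intro conjI allI impI)
     apply (rule Gfun_analytic)
    apply (rule identity)
      apply auto
    done
qed

end
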